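(* Let $X,Y\in\mathcal L^2$ be identically distributed and $r\in[-1,1]$. Then $(X,Y)\in\mathrm{IC}_r$ if and only if $(X,Y)$ is quasi-$r$-Fréchet.
   Context: All random variables live on an atomless probability space. $\mathcal L^2$ denotes the set of non-degenerate real random variables with finite variance. A function $g:\mathbb R\to\mathbb R$ is admissible for $(X,Y)$ if it is measurable and $g(X),g(Y)\in\mathcal L^2$. For $r\in[-1,1]$, $(X,Y)\in\mathrm{IC}_r$ means $X,Y\in\mathcal L^2$ and $\mathrm{Corr}(X,Y)=\mathrm{Corr}(g(X),g(Y))=r$ for all admissible $g$. A random vector $(X,Y)$ with identical marginal distribution function $F$ and joint distribution function $H$ is quasi-$r$-Fréchet if $\frac{H(x,y)+H(y,x)}{2}=r\min(F(x),F(y))+(1-r)F(x)F(y)$ for all $x,y\in\mathbb R$. *)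

theory Defs
  imports "HOL-Probability.Probability"
begin

definition atomless :: "'a measure \<Rightarrow> bool" where
  "atomless M \<longleftrightarrow> (\<forall>A\<in>sets M. measure M A > 0 \<longrightarrow>
     (\<exists>B\<in>sets M. B \<subseteq> A \<and> 0 < measure M B \<and> measure M B < measure M A))"

definition L2 :: "'a measure \<Rightarrow> ('a \<Rightarrow> real) \<Rightarrow> bool" where
  "L2 M X \<longleftrightarrow> X \<in> borel_measurable M \<and> integrable M (\<lambda>\<omega>. (X \<omega>)\<^sup>2)
     \<and> \<not> (\<exists>c. AE \<omega> in M. X \<omega> = c)"

definition covar :: "'a measure \<Rightarrow> ('a \<Rightarrow> real) \<Rightarrow> ('a \<Rightarrow> real) \<Rightarrow> real" where
  "covar M X Y = (\<integral>\<omega>. (X \<omega> - (\<integral>\<omega>. X \<omega> \<partial>M)) * (Y \<omega> - (\<integral>\<omega>. Y \<omega> \<partial>M)) \<partial>M)"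

definition corr :: "'a measure \<Rightarrow> ('a \<Rightarrow> real) \<Rightarrow> ('a \<Rightarrow> real) \<Rightarrow> real" where
  "corr M X Y = covar M X Y / sqrt (covar M X X * covar M Y Y)"

definition admissible :: "'a measure \<Rightarrow> (real \<Rightarrow> real) \<Rightarrow> ('a \<Rightarrow> real) \<Rightarrow> ('a \<Rightarrow> real) \<Rightarrow> bool" where
  "admissible M g X Y \<longleftrightarrow> g \<in> borel_measurable borel \<and> L2 M (g \<circ> X) \<and> L2 M (g \<circ> Y)"

definition IC :: "'a measure \<Rightarrow> real \<Rightarrow> ('a \<Rightarrow> real) \<Rightarrow> ('a \<Rightarrow> real) \<Rightarrow> bool" where
  "IC M r X Y \<longleftrightarrow> L2 M X \<and> L2 M Y \<and> corr M X Y = r \<and>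
     (\<forall>g. admissible M g X Y \<longrightarrow> corr M (g \<circ> X) (g \<circ> Y) = r)"

definition cdf1 :: "'a measure \<Rightarrow> ('a \<Rightarrow> real) \<Rightarrow> real \<Rightarrow> real" where
  "cdf1 M X x = measure M {\<omega>\<in>space M. X \<omega> \<le> x}"

definition jcdf :: "'a measure \<Rightarrow> ('a \<Rightarrow> real) \<Rightarrow> ('a \<Rightarrow> real) \<Rightarrow> real \<Rightarrow> real \<Rightarrow> real" where
  "jcdf M X Y x y = measure M {\<omega>\<in>space M. X \<omega> \<le> x \<and> Y \<omega> \<le> y}"

definition quasi_frechet :: "'a measure \<Rightarrow> real \<Rightarrow> ('a \<Rightarrow> real) \<Rightarrow> ('a \<Rightarrow> real) \<Rightarrow> bool" where
  "quasi_frechet M r X Y \<longleftrightarrow> (\<forall>x y.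
     (jcdf M X Y x y + jcdf M X Y y x) / 2
       = r * min (cdf1 M X x) (cdf1 M X y) + (1 - r) * cdf1 M X x * cdf1 M X y)"

end

theory Submission
  imports Defs
begin



lemma sets_borel_R2:
  "sets (borel :: (real \<times> real) measure) = sigma_sets UNIV {{..a::real} \<times> {..b::real} | a b. True}"
proof -
  have e: "range (\<lambda>a. {..a::real\<times>real}) = {{..a::real} \<times> {..b::real} | a b. True}"
  proof -
    have "\<And>a b. {..(a::real,b::real)} = {..a} \<times> {..b}" by (auto simp: less_eq_prod_def)
    then show ?thesis by (auto simp: image_def)
  qed
  show ?thesis
    by (subst borel_eq_atMost) (simp add: e)
qed


lemma compl_R2:
  fixes N :: "(real\<times>real) measure"
  assumes "prob_space N" "sets N = sets borel" "D \<in> sets borel"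
  shows "measure N (UNIV - D) = 1 - measure N D"
proof -
  interpret prob_space N by fact
  have sp: "space N = UNIV" using sets_eq_imp_space_eq[OF assms(2)] by simp
  have "D \<in> events" using assms(2,3) by simp
  from prob_compl[OF this] show ?thesis unfolding sp .
qed
lemma uni_R2:
  fixes N :: "(real\<times>real) measure" and D :: "nat \<Rightarrow> (real\<times>real) set"
  assumes "prob_space N" "sets N = sets borel" "range D \<subseteq> sets borel" "disjoint_family D"
  shows "(\<lambda>i. measure N (D i)) sums measure N (\<Union>i. D i)"
proof -
  interpret prob_space N by fact
  have "range D \<subseteq> events" using assms(2,3) by simp
  from finite_measure_UNION[OF this assms(4)] show ?thesis .
qed

lemma dynkin4:
  fixes A1 A2 A3 A4 :: "(real \<times> real) measure" and r :: real
  assumes P: "prob_space A1" "prob_space A2" "prob_space A3" "prob_space A4"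
    and S: "sets A1 = sets borel" "sets A2 = sets borel" "sets A3 = sets borel" "sets A4 = sets borel"
    and gen: "\<And>a b. measure A1 ({..a} \<times> {..b}) + measure A2 ({..a} \<times> {..b})
        = 2*r*measure A3 ({..a} \<times> {..b}) + 2*(1-r)*measure A4 ({..a} \<times> {..b})"
    and C: "C \<in> sets borel"
  shows "measure A1 C + measure A2 C = 2*r*measure A3 C + 2*(1-r)*measure A4 C"
proof -
  let ?G = "{{..a::real} \<times> {..b::real} | a b. True}"
  have st: "Int_stable ?G"
  proof (rule Int_stableI)
    fix P Q assume "P \<in> ?G" "Q \<in> ?G"
    then obtain a b c d where "P = {..a} \<times> {..b}" "Q = {..c} \<times> {..d}" by blast
    then have "P \<inter> Q = {..min a c} \<times> {..min b d}" by auto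
    then show "P \<inter> Q \<in> ?G" by blast
  qed
  have C': "C \<in> sigma_sets UNIV ?G" using C sets_borel_R2 by simp
  have Gs: "?G \<subseteq> Pow UNIV" by simp
  show ?thesis
  proof (rule sigma_sets_induct_disjoint[OF st Gs C', where P="\<lambda>C. measure A1 C + measure A2 C = 2*r*measure A3 C + 2*(1-r)*measure A4 C"])
    fix A assume "A \<in> ?G" then show "measure A1 A + measure A2 A = 2*r*measure A3 A + 2*(1-r)*measure A4 A"
      using gen by blast
  next
    show "measure A1 {} + measure A2 {} = 2*r*measure A3 {} + 2*(1-r)*measure A4 {}" by simp
  next
    fix A assume A: "A \<in> sigma_sets UNIV ?G" and IH: "measure A1 A + measure A2 A = 2*r*measure A3 A + 2*(1-r)*measure A4 A"
    then have "A \<in> sets borel" using sets_borel_R2 by simp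
    then have c: "measure A1 (UNIV - A) = 1 - measure A1 A" "measure A2 (UNIV - A) = 1 - measure A2 A"
      "measure A3 (UNIV - A) = 1 - measure A3 A" "measure A4 (UNIV - A) = 1 - measure A4 A"
      using compl_R2 P S by auto
    show "measure A1 (UNIV - A) + measure A2 (UNIV - A) = 2*r*measure A3 (UNIV - A) + 2*(1-r)*measure A4 (UNIV - A)"
      unfolding c using IH by (simp add: algebra_simps)
  next
    fix A :: "nat \<Rightarrow> (real\<times>real) set"
    assume dj: "disjoint_family A" and rA: "range A \<subseteq> sigma_sets UNIV ?G"
      and IH: "\<And>i. measure A1 (A i) + measure A2 (A i) = 2*r*measure A3 (A i) + 2*(1-r)*measure A4 (A i)"
    have R: "range A \<subseteq> sets borel" using rA sets_borel_R2 by simp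
    have s1: "(\<lambda>i. measure A1 (A i) + measure A2 (A i)) sums (measure A1 (\<Union>i. A i) + measure A2 (\<Union>i. A i))"
      by (intro sums_add uni_R2 P S R dj)
    have s2: "(\<lambda>i. 2*r*measure A3 (A i) + 2*(1-r)*measure A4 (A i)) sums (2*r*measure A3 (\<Union>i. A i) + 2*(1-r)*measure A4 (\<Union>i. A i))"
      by (intro sums_add sums_mult uni_R2 P S R dj)
    have s1': "(\<lambda>i. 2*r*measure A3 (A i) + 2*(1-r)*measure A4 (A i)) sums (measure A1 (\<Union>i. A i) + measure A2 (\<Union>i. A i))"
      using s1 IH by simp
    show "measure A1 (\<Union>i. A i) + measure A2 (\<Union>i. A i) = 2*r*measure A3 (\<Union>i. A i) + 2*(1-r)*measure A4 (\<Union>i. A i)"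
      using sums_unique2[OF s1' s2] .
  qed
qed


lemma ennlin_mult:
  fixes a1 a2 a3 a4 c k k' j :: ennreal
  assumes "a1 + a2 + k*a3 = k'*a3 + j*a4"
  shows "c*a1 + c*a2 + k*(c*a3) = k'*(c*a3) + j*(c*a4)"
proof -
  have "c*a1 + c*a2 + k*(c*a3) = c*(a1 + a2 + k*a3)" by (simp add: algebra_simps)
  also have "\<dots> = c*(k'*a3 + j*a4)" using assms by simp
  also have "\<dots> = k'*(c*a3) + j*(c*a4)" by (simp add: algebra_simps)
  finally show ?thesis .
qed
lemma ennlin_add:
  fixes a1 a2 a3 a4 b1 b2 b3 b4 k k' j :: ennreal
  assumes "a1 + a2 + k*a3 = k'*a3 + j*a4" "b1 + b2 + k*b3 = k'*b3 + j*b4"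
  shows "(b1 + a1) + (b2 + a2) + k*(b3 + a3) = k'*(b3 + a3) + j*(b4 + a4)"
proof -
  have "(b1 + a1) + (b2 + a2) + k*(b3 + a3) = (a1 + a2 + k*a3) + (b1 + b2 + k*b3)" by (simp add: algebra_simps)
  also have "\<dots> = (k'*a3 + j*a4) + (k'*b3 + j*b4)" using assms by simp
  also have "\<dots> = k'*(b3 + a3) + j*(b4 + a4)" by (simp add: algebra_simps)
  finally show ?thesis .
qed



lemma incseq_cmult_enn: "incseq (c::nat \<Rightarrow> ennreal) \<Longrightarrow> incseq (\<lambda>i. k * c i)"
  unfolding incseq_def by (auto intro: mult_left_mono)
lemma incseq_add_enn: "incseq (a::nat \<Rightarrow> ennreal) \<Longrightarrow> incseq b \<Longrightarrow> incseq (\<lambda>i. a i + b i)"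
  unfolding incseq_def by (auto intro: add_mono)
lemma sup2:
  fixes c d :: "nat \<Rightarrow> ennreal"
  assumes "incseq c" "incseq d"
  shows "(SUP i. k * c i + j * d i) = k * (SUP i. c i) + j * (SUP i. d i)"
  using ennreal_SUP_add[OF incseq_cmult_enn[OF assms(1)] incseq_cmult_enn[OF assms(2)]]
  by (simp add: SUP_mult_left_ennreal)
lemma sup3:
  fixes a b c :: "nat \<Rightarrow> ennreal"
  assumes "incseq a" "incseq b" "incseq c"
  shows "(SUP i. a i + b i + k * c i) = (SUP i. a i) + (SUP i. b i) + k * (SUP i. c i)"
  using ennreal_SUP_add[OF incseq_add_enn[OF assms(1,2)] incseq_cmult_enn[OF assms(3)]]
    ennreal_SUP_add[OF assms(1,2)]
  by (simp add: SUP_mult_left_ennreal)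

lemma meas_tr:
  assumes "sets N = sets borel" "u \<in> borel_measurable borel"
  shows "u \<in> borel_measurable N"
  using assms(2) unfolding measurable_cong_sets[OF assms(1) refl] .

lemma nn4:
  fixes A1 A2 A3 A4 :: "(real \<times> real) measure" and r :: real
  assumes P: "prob_space A1" "prob_space A2" "prob_space A3" "prob_space A4"
    and S: "sets A1 = sets borel" "sets A2 = sets borel" "sets A3 = sets borel" "sets A4 = sets borel"
    and eq: "\<And>C. C \<in> sets borel \<Longrightarrow> measure A1 C + measure A2 C = 2*r*measure A3 C + 2*(1-r)*measure A4 C"
    and r1: "r \<le> 1"
    and f: "f \<in> borel_measurable borel"
  shows "nn_integral A1 f + nn_integral A2 f + ennreal (2*max (-r) 0) * nn_integral A3 f
       = ennreal (2*max r 0) * nn_integral A3 f + ennreal (2*(1-r)) * nn_integral A4 f"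
  using f
proof (induct rule: borel_measurable_induct)
  case (cong f g)
  have sp: "space A1 = UNIV" "space A2 = UNIV" "space A3 = UNIV" "space A4 = UNIV"
    using S by (auto dest!: sets_eq_imp_space_eq)
  have "f = g" using cong(3) by auto
  then show ?case using cong(4) by simp
next
  case (set C)
  have em: "\<And>N. prob_space N \<Longrightarrow> emeasure N C = ennreal (measure N C)"
  proof -
    fix N :: "(real\<times>real) measure" assume "prob_space N"
    then interpret prob_space N .
    show "emeasure N C = ennreal (measure N C)" by (rule emeasure_eq_measure)
  qed
  have C: "C \<in> sets A1" "C \<in> sets A2" "C \<in> sets A3" "C \<in> sets A4" using set S by auto
  have nn: "0 \<le> measure A1 C" "0 \<le> measure A2 C" "0 \<le> measure A3 C" "0 \<le> measure A4 C" by auto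
  have r: "measure A1 C + measure A2 C + (2*max (-r) 0) * measure A3 C
     = (2*max r 0) * measure A3 C + (2*(1-r)) * measure A4 C"
    using eq[OF set] by (auto simp: max_def algebra_simps)
  have "ennreal (measure A1 C) + ennreal (measure A2 C) + ennreal (2*max (-r) 0) * ennreal (measure A3 C)
      = ennreal (measure A1 C + measure A2 C + (2*max (-r) 0) * measure A3 C)"
    using nn by (simp add: ennreal_plus ennreal_mult)
  also have "\<dots> = ennreal ((2*max r 0) * measure A3 C + (2*(1-r)) * measure A4 C)" using r by simp
  also have "\<dots> = ennreal (2*max r 0) * ennreal (measure A3 C) + ennreal (2*(1-r)) * ennreal (measure A4 C)"
    using nn r1 by (simp add: ennreal_plus ennreal_mult)
  finally show ?case using C by (simp add: em P)
next
  case (mult u c)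
  have m: "u \<in> borel_measurable A1" "u \<in> borel_measurable A2" "u \<in> borel_measurable A3" "u \<in> borel_measurable A4"
    using mult(2) S by (auto intro: meas_tr)
  have e: "nn_integral A1 (\<lambda>x. c * u x) = c * nn_integral A1 u"
    "nn_integral A2 (\<lambda>x. c * u x) = c * nn_integral A2 u"
    "nn_integral A3 (\<lambda>x. c * u x) = c * nn_integral A3 u"
    "nn_integral A4 (\<lambda>x. c * u x) = c * nn_integral A4 u"
    using m by (auto intro!: nn_integral_cmult)
  show ?case unfolding e by (rule ennlin_mult[OF mult(4)])
next
  case (add u v)
  have m: "u \<in> borel_measurable A1" "u \<in> borel_measurable A2" "u \<in> borel_measurable A3" "u \<in> borel_measurable A4"
    "v \<in> borel_measurable A1" "v \<in> borel_measurable A2" "v \<in> borel_measurable A3" "v \<in> borel_measurable A4"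
    using add S by (auto intro: meas_tr)
  have e: "nn_integral A1 (\<lambda>x. v x + u x) = nn_integral A1 v + nn_integral A1 u"
    "nn_integral A2 (\<lambda>x. v x + u x) = nn_integral A2 v + nn_integral A2 u"
    "nn_integral A3 (\<lambda>x. v x + u x) = nn_integral A3 v + nn_integral A3 u"
    "nn_integral A4 (\<lambda>x. v x + u x) = nn_integral A4 v + nn_integral A4 u"
    using m by (auto intro!: nn_integral_add)
  show ?case unfolding e by (rule ennlin_add[OF add(3) add(7)])
next
  case (seq U)
  have m: "\<And>i. U i \<in> borel_measurable A1" "\<And>i. U i \<in> borel_measurable A2" "\<And>i. U i \<in> borel_measurable A3" "\<And>i. U i \<in> borel_measurable A4"
    using seq(1) S by (auto intro: meas_tr)
  have mc: "\<And>N. (\<And>i. U i \<in> borel_measurable N) \<Longrightarrow> nn_integral N (SUP i. U i) = (SUP i. nn_integral N (U i))"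
  proof -
    fix N assume "\<And>i. U i \<in> borel_measurable N"
    then show "nn_integral N (SUP i. U i) = (SUP i. nn_integral N (U i))"
    proof -
      have e: "(SUP i. U i) = (\<lambda>x. SUP i. U i x)" by (intro ext) (simp add: SUP_apply image_image)
      show ?thesis unfolding e by (rule nn_integral_monotone_convergence_SUP[OF seq(4)]) fact
    qed
  qed
  have inc: "incseq (\<lambda>i. nn_integral N (U i))" for N
    unfolding incseq_def
  proof (intro allI impI)
    fix m n :: nat assume "m \<le> n"
    then have "U m \<le> U n" using seq(4) by (simp add: incseq_def)
    then show "nn_integral N (U m) \<le> nn_integral N (U n)" by (intro nn_integral_mono) (rule le_funD)
  qed
  have "nn_integral A1 (SUP i. U i) + nn_integral A2 (SUP i. U i) + ennreal (2*max (-r) 0) * nn_integral A3 (SUP i. U i)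
     = (SUP i. nn_integral A1 (U i) + nn_integral A2 (U i) + ennreal (2*max (-r) 0) * nn_integral A3 (U i))"
    unfolding mc[OF m(1)] mc[OF m(2)] mc[OF m(3)] by (rule sup3[OF inc inc inc, symmetric])
  also have "\<dots> = (SUP i. ennreal (2*max r 0) * nn_integral A3 (U i) + ennreal (2*(1-r)) * nn_integral A4 (U i))"
    using seq(3) by simp
  also have "\<dots> = ennreal (2*max r 0) * nn_integral A3 (SUP i. U i) + ennreal (2*(1-r)) * nn_integral A4 (SUP i. U i)"
    unfolding mc[OF m(3)] mc[OF m(4)] by (rule sup2[OF inc inc])
  finally show ?case .
qed

lemma sq_bound: "\<bar>(a::real) * b\<bar> \<le> a^2 + b^2"
proof -
  have e: "(\<bar>a\<bar> - \<bar>b\<bar>)^2 = a^2 + b^2 - 2*(\<bar>a\<bar>*\<bar>b\<bar>)"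
    by (simp add: power2_eq_square algebra_simps)
  have "0 \<le> (\<bar>a\<bar> - \<bar>b\<bar>)^2" by simp
  then have "2*(\<bar>a\<bar>*\<bar>b\<bar>) \<le> a^2 + b^2" unfolding e by simp
  moreover have "0 \<le> \<bar>a\<bar> * \<bar>b\<bar>" by simp
  ultimately show ?thesis unfolding abs_mult by linarith
qed
lemma int_prod:
  fixes a b :: "'a \<Rightarrow> real"
  assumes [measurable]: "a \<in> borel_measurable M" "b \<in> borel_measurable M"
    and "integrable M (\<lambda>x. (a x)^2)" "integrable M (\<lambda>x. (b x)^2)"
  shows "integrable M (\<lambda>x. a x * b x)"
proof (rule Bochner_Integration.integrable_bound[OF Bochner_Integration.integrable_add[OF assms(3,4)]])
  show "AE x in M. norm (a x * b x) \<le> norm ((a x)^2 + (b x)^2)"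
  proof (intro AE_I2)
    fix x
    have "0 \<le> (a x)^2 + (b x)^2" by simp
    then show "norm (a x * b x) \<le> norm ((a x)^2 + (b x)^2)"
      using sq_bound[of "a x" "b x"] by (simp only: real_norm_def abs_of_nonneg)
  qed
qed simp


locale qfs = prob_space M for M :: "'a measure" +
  fixes X Y :: "'a \<Rightarrow> real"
  assumes Xm[measurable]: "X \<in> borel_measurable M" and Ym[measurable]: "Y \<in> borel_measurable M"
    and dist: "distr M borel X = distr M borel Y"
begin

definition "F = distr M borel X"
definition "mu1 = distr M borel (\<lambda>\<omega>. (X \<omega>, Y \<omega>))"
definition "mu2 = distr M borel (\<lambda>\<omega>. (Y \<omega>, X \<omega>))"
definition "mu3 = distr M borel (\<lambda>\<omega>. (X \<omega>, X \<omega>))"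
definition "mu4 = F \<Otimes>\<^sub>M F"

lemma probF: "prob_space F" unfolding F_def by (rule prob_space_distr) simp
lemma probs: "prob_space mu1" "prob_space mu2" "prob_space mu3" "prob_space mu4"
  unfolding mu1_def mu2_def mu3_def mu4_def
  by (auto intro!: prob_space_distr prob_space_pair probF)
lemma setss: "sets mu1 = sets borel" "sets mu2 = sets borel" "sets mu3 = sets borel" "sets mu4 = sets borel"
proof -
  show "sets mu1 = sets borel" "sets mu2 = sets borel" "sets mu3 = sets borel" unfolding mu1_def mu2_def mu3_def by auto
  have "sets mu4 = sets (borel \<Otimes>\<^sub>M borel)" unfolding mu4_def F_def
    by (intro sets_pair_measure_cong) auto
  then show "sets mu4 = sets borel" by (metis borel_prod)
qed

lemma rect_borel: "{..a::real} \<times> {..b::real} \<in> sets (borel :: (real\<times>real) measure)"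
  by (intro borel_closed closed_Times closed_atMost)

lemma cdf_mono: "a \<le> b \<Longrightarrow> cdf1 M X a \<le> cdf1 M X b"
  unfolding cdf1_def by (intro finite_measure_mono) auto

lemma gen_vals:
  "measure mu1 ({..a} \<times> {..b}) = jcdf M X Y a b"
  "measure mu2 ({..a} \<times> {..b}) = jcdf M X Y b a"
  "measure mu3 ({..a} \<times> {..b}) = min (cdf1 M X a) (cdf1 M X b)"
  "measure mu4 ({..a} \<times> {..b}) = cdf1 M X a * cdf1 M X b"
proof -
  show "measure mu1 ({..a} \<times> {..b}) = jcdf M X Y a b"
    unfolding mu1_def jcdf_def by (subst measure_distr) (auto intro!: arg_cong[where f="measure M"] rect_borel)
  show "measure mu2 ({..a} \<times> {..b}) = jcdf M X Y b a"
    unfolding mu2_def jcdf_def by (subst measure_distr) (auto intro!: arg_cong[where f="measure M"] rect_borel)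
  have "measure mu3 ({..a} \<times> {..b}) = cdf1 M X (min a b)"
    unfolding mu3_def cdf1_def by (subst measure_distr) (auto intro!: arg_cong[where f="measure M"] rect_borel)
  also have "\<dots> = min (cdf1 M X a) (cdf1 M X b)"
    using cdf_mono[of a b] cdf_mono[of b a] by (cases "a \<le> b") (auto simp: min_def)
  finally show "measure mu3 ({..a} \<times> {..b}) = min (cdf1 M X a) (cdf1 M X b)" .
  interpret PF: prob_space F by (rule probF)
  have c: "\<And>a. measure F {..a} = cdf1 M X a"
    unfolding F_def cdf1_def by (subst measure_distr) (auto intro!: arg_cong[where f="measure M"] rect_borel)
  have "emeasure mu4 ({..a} \<times> {..b}) = emeasure F {..a} * emeasure F {..b}"
    unfolding mu4_def by (rule PF.emeasure_pair_measure_Times) (auto simp: F_def)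
  then show "measure mu4 ({..a} \<times> {..b}) = cdf1 M X a * cdf1 M X b"
    by (simp add: measure_def enn2real_mult c[symmetric])
qed

end



context qfs begin

lemma int_Y:
  assumes [measurable]: "(h :: real \<Rightarrow> real) \<in> borel_measurable borel" and "integrable M (\<lambda>\<omega>. h (X \<omega>))"
  shows "integrable M (\<lambda>\<omega>. h (Y \<omega>))"
  using assms(2) integrable_distr_eq[of X M borel h] integrable_distr_eq[of Y M borel h] dist by simp

lemma integral_Y:
  assumes [measurable]: "(h :: real \<Rightarrow> real) \<in> borel_measurable borel"
  shows "(\<integral>\<omega>. h (Y \<omega>) \<partial>M) = (\<integral>\<omega>. h (X \<omega>) \<partial>M)"
  using integral_distr[of X M borel h] integral_distr[of Y M borel h] dist by simp

lemma set_identity: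
  assumes QF: "quasi_frechet M r X Y" and C: "C \<in> sets borel"
  shows "measure mu1 C + measure mu2 C = 2*r*measure mu3 C + 2*(1-r)*measure mu4 C"
proof (rule dynkin4[OF probs setss _ C])
  fix a b
  show "measure mu1 ({..a} \<times> {..b}) + measure mu2 ({..a} \<times> {..b}) =
        2 * r * measure mu3 ({..a} \<times> {..b}) + 2 * (1 - r) * measure mu4 ({..a} \<times> {..b})"
  proof -
    have "(jcdf M X Y a b + jcdf M X Y b a) / 2 = r * min (cdf1 M X a) (cdf1 M X b) + (1 - r) * cdf1 M X a * cdf1 M X b"
      using QF unfolding quasi_frechet_def by blast
    then show ?thesis unfolding gen_vals by (simp add: field_simps)
  qed
qed

lemma nn_identity:
  assumes QF: "quasi_frechet M r X Y" and r1: "r \<le> 1" and f: "f \<in> borel_measurable borel"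
  shows "nn_integral mu1 f + nn_integral mu2 f + ennreal (2*max (-r) 0) * nn_integral mu3 f
       = ennreal (2*max r 0) * nn_integral mu3 f + ennreal (2*(1-r)) * nn_integral mu4 f"
  by (rule nn4[OF probs setss set_identity[OF QF] r1 f])

lemma key_pq:
  fixes p q :: "real \<Rightarrow> real"
  assumes QF: "quasi_frechet M r X Y" and r1: "r \<le> 1"
    and [measurable]: "p \<in> borel_measurable borel" "q \<in> borel_measurable borel"
    and pn: "\<And>x. 0 \<le> p x" and qn: "\<And>x. 0 \<le> q x"
    and p2: "integrable M (\<lambda>\<omega>. (p (X \<omega>))^2)" and q2: "integrable M (\<lambda>\<omega>. (q (X \<omega>))^2)"
  shows "(\<integral>\<omega>. p (X \<omega>) * q (Y \<omega>) \<partial>M) + (\<integral>\<omega>. p (Y \<omega>) * q (X \<omega>) \<partial>M)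
    = 2*r*(\<integral>\<omega>. p (X \<omega>) * q (X \<omega>) \<partial>M) + 2*(1-r)*((\<integral>\<omega>. p (X \<omega>) \<partial>M) * (\<integral>\<omega>. q (X \<omega>) \<partial>M))"
proof -
  define f where "f = (\<lambda>z. ennreal (p (fst z) * q (snd z)))"
  have "(\<lambda>z. p (fst z) * q (snd z)) \<in> borel_measurable (borel \<Otimes>\<^sub>M borel)" by measurable
  then have pqm[measurable]: "(\<lambda>z. p (fst z) * q (snd z)) \<in> borel_measurable borel" by (simp add: borel_prod)
  have "f \<in> borel_measurable (borel \<Otimes>\<^sub>M borel)" unfolding f_def by measurable
  then have fm[measurable]: "f \<in> borel_measurable borel" by (simp add: borel_prod)
  have p2Y: "integrable M (\<lambda>\<omega>. (p (Y \<omega>))^2)" by (rule int_Y[OF _ p2]) simp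
  have q2Y: "integrable M (\<lambda>\<omega>. (q (Y \<omega>))^2)" by (rule int_Y[OF _ q2]) simp
  have pX: "integrable M (\<lambda>\<omega>. p (X \<omega>))" by (rule square_integrable_imp_integrable[OF _ p2]) simp
  have qX: "integrable M (\<lambda>\<omega>. q (X \<omega>))" by (rule square_integrable_imp_integrable[OF _ q2]) simp
  have i1: "integrable M (\<lambda>\<omega>. p (X \<omega>) * q (Y \<omega>))" by (rule int_prod[OF _ _ p2 q2Y]) simp_all
  have i2: "integrable M (\<lambda>\<omega>. p (Y \<omega>) * q (X \<omega>))" by (rule int_prod[OF _ _ p2Y q2]) simp_all
  have i3: "integrable M (\<lambda>\<omega>. p (X \<omega>) * q (X \<omega>))" by (rule int_prod[OF _ _ p2 q2]) simp_all
  have n1: "nn_integral mu1 f = ennreal (\<integral>\<omega>. p (X \<omega>) * q (Y \<omega>) \<partial>M)"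
    unfolding mu1_def f_def using pn qn
    by (subst nn_integral_distr) (auto intro!: nn_integral_eq_integral i1 pqm)
  have n2: "nn_integral mu2 f = ennreal (\<integral>\<omega>. p (Y \<omega>) * q (X \<omega>) \<partial>M)"
    unfolding mu2_def f_def using pn qn
    by (subst nn_integral_distr) (auto intro!: nn_integral_eq_integral i2 pqm)
  have n3: "nn_integral mu3 f = ennreal (\<integral>\<omega>. p (X \<omega>) * q (X \<omega>) \<partial>M)"
    unfolding mu3_def f_def using pn qn
    by (subst nn_integral_distr) (auto intro!: nn_integral_eq_integral i3 pqm)
  interpret PF: prob_space F by (rule probF)
  have Fp: "(\<integral>\<^sup>+ x. ennreal (p x) \<partial>F) = ennreal (\<integral>\<omega>. p (X \<omega>) \<partial>M)"
    unfolding F_def using pn by (subst nn_integral_distr) (auto intro!: nn_integral_eq_integral pX)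
  have Fq: "(\<integral>\<^sup>+ x. ennreal (q x) \<partial>F) = ennreal (\<integral>\<omega>. q (X \<omega>) \<partial>M)"
    unfolding F_def using qn by (subst nn_integral_distr) (auto intro!: nn_integral_eq_integral qX)
  have fm4: "f \<in> borel_measurable (F \<Otimes>\<^sub>M F)"
    using meas_tr[OF setss(4) fm] unfolding mu4_def .
  have FM: "sets F = sets borel" unfolding F_def by simp
  have pF: "(\<lambda>x. ennreal (p x)) \<in> borel_measurable F" by (rule meas_tr[OF FM]) simp
  have qF: "(\<lambda>x. ennreal (q x)) \<in> borel_measurable F" by (rule meas_tr[OF FM]) simp
  have "nn_integral mu4 f = (\<integral>\<^sup>+ x. \<integral>\<^sup>+ y. f (x, y) \<partial>F \<partial>F)"
    unfolding mu4_def by (rule PF.nn_integral_fst[OF fm4, symmetric])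
  also have "\<dots> = (\<integral>\<^sup>+ x. ennreal (p x) * (\<integral>\<^sup>+ y. ennreal (q y) \<partial>F) \<partial>F)"
    unfolding f_def using pn qn
    by (intro nn_integral_cong) (simp add: ennreal_mult nn_integral_cmult[OF qF])
  also have "\<dots> = (\<integral>\<^sup>+ x. ennreal (p x) \<partial>F) * (\<integral>\<^sup>+ y. ennreal (q y) \<partial>F)"
    by (rule nn_integral_multc[OF pF])
  finally have n4: "nn_integral mu4 f = ennreal (\<integral>\<omega>. p (X \<omega>) \<partial>M) * ennreal (\<integral>\<omega>. q (X \<omega>) \<partial>M)"
    using Fp Fq by simp
  have nn: "0 \<le> (\<integral>\<omega>. p (X \<omega>) * q (Y \<omega>) \<partial>M)" "0 \<le> (\<integral>\<omega>. p (Y \<omega>) * q (X \<omega>) \<partial>M)"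
    "0 \<le> (\<integral>\<omega>. p (X \<omega>) * q (X \<omega>) \<partial>M)" "0 \<le> (\<integral>\<omega>. p (X \<omega>) \<partial>M)" "0 \<le> (\<integral>\<omega>. q (X \<omega>) \<partial>M)"
    using pn qn by (auto intro!: integral_nonneg_AE)
  define A where "A = (\<integral>\<omega>. p (X \<omega>) * q (Y \<omega>) \<partial>M)"
  define B where "B = (\<integral>\<omega>. p (Y \<omega>) * q (X \<omega>) \<partial>M)"
  define Dd where "Dd = (\<integral>\<omega>. p (X \<omega>) * q (X \<omega>) \<partial>M)"
  define P1 where "P1 = (\<integral>\<omega>. p (X \<omega>) \<partial>M)"
  define Q1 where "Q1 = (\<integral>\<omega>. q (X \<omega>) \<partial>M)"
  have nn': "0 \<le> A" "0 \<le> B" "0 \<le> Dd" "0 \<le> P1" "0 \<le> Q1" using nn unfolding A_def B_def Dd_def P1_def Q1_def by auto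
  have "ennreal A + ennreal B + ennreal (2*max (-r) 0) * ennreal Dd
      = ennreal (2*max r 0) * ennreal Dd + ennreal (2*(1-r)) * (ennreal P1 * ennreal Q1)"
    using nn_identity[OF QF r1 fm] n1 n2 n3 n4 unfolding A_def B_def Dd_def P1_def Q1_def by simp
  then have "ennreal (A + B + (2*max (-r) 0) * Dd) = ennreal ((2*max r 0) * Dd + (2*(1-r)) * (P1 * Q1))"
    using nn' r1 by (simp add: ennreal_plus ennreal_mult)
  then have "A + B + (2*max (-r) 0) * Dd = (2*max r 0) * Dd + (2*(1-r)) * (P1 * Q1)"
    using nn' r1 by (subst (asm) ennreal_inj) auto
  then have "A + B = 2*r*Dd + 2*(1-r)*(P1*Q1)"
  proof (cases "0 \<le> r")
    case True
    then have "max r 0 = r" "max (-r) 0 = 0" by auto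
    then show ?thesis using \<open>A + B + (2*max (-r) 0) * Dd = (2*max r 0) * Dd + (2*(1-r)) * (P1 * Q1)\<close> by simp
  next
    case False
    then have "max r 0 = 0" "max (-r) 0 = -r" by auto
    then show ?thesis using \<open>A + B + (2*max (-r) 0) * Dd = (2*max r 0) * Dd + (2*(1-r)) * (P1 * Q1)\<close> by (simp add: algebra_simps)
  qed
  then show ?thesis unfolding A_def B_def Dd_def P1_def Q1_def .
qed

end


lemma (in prob_space) int_sq_int:
  fixes u :: "'a \<Rightarrow> real"
  assumes [measurable]: "u \<in> borel_measurable M" and "integrable M (\<lambda>\<omega>. (u \<omega>)^2)"
  shows "integrable M u"
  by (rule square_integrable_imp_integrable[OF _ assms(2)]) simp

lemma (in prob_space) covar_eq:
  fixes u v :: "'a \<Rightarrow> real"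
  assumes [measurable]: "u \<in> borel_measurable M" "v \<in> borel_measurable M"
    and u2: "integrable M (\<lambda>\<omega>. (u \<omega>)^2)" and v2: "integrable M (\<lambda>\<omega>. (v \<omega>)^2)"
  shows "covar M u v = expectation (\<lambda>\<omega>. u \<omega> * v \<omega>) - expectation u * expectation v"
proof -
  have iu: "integrable M u" by (rule int_sq_int[OF _ u2]) simp
  have iv: "integrable M v" by (rule int_sq_int[OF _ v2]) simp
  have iuv: "integrable M (\<lambda>\<omega>. u \<omega> * v \<omega>)" by (rule int_prod[OF _ _ u2 v2]) simp_all
  define a where "a = expectation u"
  define b where "b = expectation v"
  have e: "(\<lambda>\<omega>. (u \<omega> - a) * (v \<omega> - b)) = (\<lambda>\<omega>. (u \<omega> * v \<omega> - a * v \<omega>) - (b * u \<omega> - a * b))"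
    by (auto simp: algebra_simps)
  have "covar M u v = expectation (\<lambda>\<omega>. (u \<omega> * v \<omega> - a * v \<omega>) - (b * u \<omega> - a * b))"
    unfolding covar_def a_def[symmetric] b_def[symmetric] e ..
  also have "\<dots> = (expectation (\<lambda>\<omega>. u \<omega> * v \<omega>) - a * b) - (b * a - a * b)"
    using iu iv iuv by (simp add: prob_space a_def b_def)
  finally show ?thesis unfolding a_def b_def by simp
qed

lemma (in prob_space) var_pos:
  fixes u :: "'a \<Rightarrow> real"
  assumes "L2 M u"
  shows "covar M u u > 0"
proof -
  have [measurable]: "u \<in> borel_measurable M" and u2: "integrable M (\<lambda>\<omega>. (u \<omega>)^2)"
    and nd: "\<not> (\<exists>c. AE \<omega> in M. u \<omega> = c)" using assms unfolding L2_def by auto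
  have iu: "integrable M u" by (rule int_sq_int[OF _ u2]) simp
  define c where "c = expectation u"
  have e: "(\<lambda>\<omega>. (u \<omega> - c) * (u \<omega> - c)) = (\<lambda>\<omega>. (u \<omega>)^2 - 2 * c * u \<omega> + c^2)"
    by (auto simp: power2_eq_square algebra_simps)
  have int: "integrable M (\<lambda>\<omega>. (u \<omega> - c) * (u \<omega> - c))"
    unfolding e using u2 iu by simp
  have nn: "0 \<le> covar M u u"
    unfolding covar_def c_def[symmetric] by (intro integral_nonneg_AE) simp
  moreover have "covar M u u \<noteq> 0"
  proof
    assume "covar M u u = 0"
    then have "AE \<omega> in M. (u \<omega> - c) * (u \<omega> - c) = 0"
      unfolding covar_def c_def[symmetric] using integral_nonneg_eq_0_iff_AE[OF int] by simp
    then have "AE \<omega> in M. u \<omega> = c" by eventually_elim simp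
    then show False using nd by blast
  qed
  ultimately show ?thesis by simp
qed

lemma expand4:
  fixes a1 a2 b1 b2 :: "'a \<Rightarrow> real"
  assumes "integrable M (\<lambda>\<omega>. a1 \<omega> * b1 \<omega>)" "integrable M (\<lambda>\<omega>. a1 \<omega> * b2 \<omega>)"
    "integrable M (\<lambda>\<omega>. a2 \<omega> * b1 \<omega>)" "integrable M (\<lambda>\<omega>. a2 \<omega> * b2 \<omega>)"
  shows "(\<integral>\<omega>. (a1 \<omega> - a2 \<omega>) * (b1 \<omega> - b2 \<omega>) \<partial>M) =
    (\<integral>\<omega>. a1 \<omega> * b1 \<omega> \<partial>M) - (\<integral>\<omega>. a1 \<omega> * b2 \<omega> \<partial>M) - (\<integral>\<omega>. a2 \<omega> * b1 \<omega> \<partial>M) + (\<integral>\<omega>. a2 \<omega> * b2 \<omega> \<partial>M)"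
proof -
  have e: "(\<lambda>\<omega>. (a1 \<omega> - a2 \<omega>) * (b1 \<omega> - b2 \<omega>)) = (\<lambda>\<omega>. (a1 \<omega> * b1 \<omega> - a1 \<omega> * b2 \<omega>) - (a2 \<omega> * b1 \<omega> - a2 \<omega> * b2 \<omega>))"
    by (auto simp: algebra_simps)
  show ?thesis unfolding e using assms by simp
qed



context qfs begin

lemma corr_g:
  fixes g :: "real \<Rightarrow> real"
  assumes QF: "quasi_frechet M r X Y" and r1: "r \<le> 1"
    and [measurable]: "g \<in> borel_measurable borel" and L: "L2 M (g \<circ> X)"
  shows "corr M (g \<circ> X) (g \<circ> Y) = r"
proof -
  define p where "p = (\<lambda>x. max (g x) 0)"
  define q where "q = (\<lambda>x. max (- g x) 0)"
  have [measurable]: "p \<in> borel_measurable borel" "q \<in> borel_measurable borel" unfolding p_def q_def by measurable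
  have pn: "\<And>x. 0 \<le> p x" and qn: "\<And>x. 0 \<le> q x" unfolding p_def q_def by auto
  have gpq: "\<And>x. g x = p x - q x" unfolding p_def q_def by auto
  have g2: "integrable M (\<lambda>\<omega>. (g (X \<omega>))^2)" using L unfolding L2_def by (simp add: o_def)
  have p2: "integrable M (\<lambda>\<omega>. (p (X \<omega>))^2)"
    by (rule Bochner_Integration.integrable_bound[OF g2]) (auto simp: p_def max_def abs_le_square_iff[symmetric])
  have q2: "integrable M (\<lambda>\<omega>. (q (X \<omega>))^2)"
    by (rule Bochner_Integration.integrable_bound[OF g2]) (auto simp: q_def max_def abs_le_square_iff[symmetric])
  have p2Y: "integrable M (\<lambda>\<omega>. (p (Y \<omega>))^2)" by (rule int_Y[OF _ p2]) simp
  have q2Y: "integrable M (\<lambda>\<omega>. (q (Y \<omega>))^2)" by (rule int_Y[OF _ q2]) simp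
  have g2Y: "integrable M (\<lambda>\<omega>. (g (Y \<omega>))^2)" by (rule int_Y[OF _ g2]) simp
  note ip = int_prod[OF _ _ p2 p2Y] int_prod[OF _ _ p2 q2Y] int_prod[OF _ _ q2 p2Y] int_prod[OF _ _ q2 q2Y]
    int_prod[OF _ _ p2Y p2] int_prod[OF _ _ p2Y q2] int_prod[OF _ _ q2Y p2] int_prod[OF _ _ q2Y q2]
    int_prod[OF _ _ p2 p2] int_prod[OF _ _ p2 q2] int_prod[OF _ _ q2 p2] int_prod[OF _ _ q2 q2]
  have ip': "integrable M (\<lambda>\<omega>. p (X \<omega>) * p (Y \<omega>))" "integrable M (\<lambda>\<omega>. p (X \<omega>) * q (Y \<omega>))"
    "integrable M (\<lambda>\<omega>. q (X \<omega>) * p (Y \<omega>))" "integrable M (\<lambda>\<omega>. q (X \<omega>) * q (Y \<omega>))"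
    "integrable M (\<lambda>\<omega>. p (Y \<omega>) * p (X \<omega>))" "integrable M (\<lambda>\<omega>. p (Y \<omega>) * q (X \<omega>))"
    "integrable M (\<lambda>\<omega>. q (Y \<omega>) * p (X \<omega>))" "integrable M (\<lambda>\<omega>. q (Y \<omega>) * q (X \<omega>))"
    "integrable M (\<lambda>\<omega>. p (X \<omega>) * p (X \<omega>))" "integrable M (\<lambda>\<omega>. p (X \<omega>) * q (X \<omega>))"
    "integrable M (\<lambda>\<omega>. q (X \<omega>) * p (X \<omega>))" "integrable M (\<lambda>\<omega>. q (X \<omega>) * q (X \<omega>))"
    using ip by simp_all
  have pX: "integrable M (\<lambda>\<omega>. p (X \<omega>))" by (rule int_sq_int[OF _ p2]) simp
  have qX: "integrable M (\<lambda>\<omega>. q (X \<omega>))" by (rule int_sq_int[OF _ q2]) simp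
  have pm: "p \<in> borel_measurable borel" and qm: "q \<in> borel_measurable borel" by simp_all
  note Kpp = key_pq[OF QF r1 pm pm pn pn p2 p2]
  note Kpq = key_pq[OF QF r1 pm qm pn qn p2 q2]
  note Kqp = key_pq[OF QF r1 qm pm qn pn q2 p2]
  note Kqq = key_pq[OF QF r1 qm qm qn qn q2 q2]
  have guv: "(\<lambda>\<omega>. g (X \<omega>) * g (Y \<omega>)) = (\<lambda>\<omega>. (p (X \<omega>) - q (X \<omega>)) * (p (Y \<omega>) - q (Y \<omega>)))"
    using gpq by simp
  have gvu: "(\<lambda>\<omega>. g (X \<omega>) * g (Y \<omega>)) = (\<lambda>\<omega>. (p (Y \<omega>) - q (Y \<omega>)) * (p (X \<omega>) - q (X \<omega>)))"
    using gpq by (simp add: mult.commute)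
  have guu: "(\<lambda>\<omega>. g (X \<omega>) * g (X \<omega>)) = (\<lambda>\<omega>. (p (X \<omega>) - q (X \<omega>)) * (p (X \<omega>) - q (X \<omega>)))"
    using gpq by simp
  have gu: "(\<lambda>\<omega>. g (X \<omega>)) = (\<lambda>\<omega>. p (X \<omega>) - q (X \<omega>))"
    using gpq by simp
  have E1: "expectation (\<lambda>\<omega>. g (X \<omega>) * g (Y \<omega>)) = expectation (\<lambda>\<omega>. p (X \<omega>) * p (Y \<omega>)) - expectation (\<lambda>\<omega>. p (X \<omega>) * q (Y \<omega>))
     - expectation (\<lambda>\<omega>. q (X \<omega>) * p (Y \<omega>)) + expectation (\<lambda>\<omega>. q (X \<omega>) * q (Y \<omega>))"
    unfolding guv by (rule expand4) (rule ip')+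
  have E2: "expectation (\<lambda>\<omega>. g (X \<omega>) * g (Y \<omega>)) = expectation (\<lambda>\<omega>. p (Y \<omega>) * p (X \<omega>)) - expectation (\<lambda>\<omega>. p (Y \<omega>) * q (X \<omega>))
     - expectation (\<lambda>\<omega>. q (Y \<omega>) * p (X \<omega>)) + expectation (\<lambda>\<omega>. q (Y \<omega>) * q (X \<omega>))"
    unfolding gvu by (rule expand4) (rule ip')+
  have E3: "expectation (\<lambda>\<omega>. g (X \<omega>) * g (X \<omega>)) = expectation (\<lambda>\<omega>. p (X \<omega>) * p (X \<omega>)) - expectation (\<lambda>\<omega>. p (X \<omega>) * q (X \<omega>))
     - expectation (\<lambda>\<omega>. q (X \<omega>) * p (X \<omega>)) + expectation (\<lambda>\<omega>. q (X \<omega>) * q (X \<omega>))"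
    unfolding guu by (rule expand4) (rule ip')+
  have E4: "expectation (\<lambda>\<omega>. g (X \<omega>)) = expectation (\<lambda>\<omega>. p (X \<omega>)) - expectation (\<lambda>\<omega>. q (X \<omega>))"
    unfolding gu using pX qX by simp
  define EU where "EU = expectation (\<lambda>\<omega>. g (X \<omega>))"
  define EUU where "EUU = expectation (\<lambda>\<omega>. g (X \<omega>) * g (X \<omega>))"
  have EUV: "expectation (\<lambda>\<omega>. g (X \<omega>) * g (Y \<omega>)) = r * EUU + (1 - r) * EU^2"
  proof -
    have "2 * expectation (\<lambda>\<omega>. g (X \<omega>) * g (Y \<omega>)) = 2 * r * EUU + 2 * (1 - r) * EU^2"
      unfolding EUU_def EU_def E4 E3 using E1 E2 Kpp Kpq Kqp Kqq
      by (simp add: power2_eq_square algebra_simps)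
    then show ?thesis by (simp add: algebra_simps)
  qed
  have EV: "expectation (\<lambda>\<omega>. g (Y \<omega>)) = EU" unfolding EU_def by (rule integral_Y) simp
  have EVV: "expectation (\<lambda>\<omega>. g (Y \<omega>) * g (Y \<omega>)) = EUU" unfolding EUU_def by (rule integral_Y) simp
  have cuv: "covar M (g \<circ> X) (g \<circ> Y) = r * (EUU - EU^2)"
  proof -
    have "covar M (g \<circ> X) (g \<circ> Y) = expectation (\<lambda>\<omega>. g (X \<omega>) * g (Y \<omega>)) - expectation (\<lambda>\<omega>. g (X \<omega>)) * expectation (\<lambda>\<omega>. g (Y \<omega>))"
      using covar_eq[of "g \<circ> X" "g \<circ> Y"] g2 g2Y by (simp add: o_def)
    also have "\<dots> = r * EUU + (1 - r) * EU^2 - EU * EU" unfolding EUV EV EU_def[symmetric] ..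
    finally show ?thesis by (simp add: power2_eq_square algebra_simps)
  qed
  have cuu: "covar M (g \<circ> X) (g \<circ> X) = EUU - EU^2"
    using covar_eq[of "g \<circ> X" "g \<circ> X"] g2
    by (simp add: o_def power2_eq_square EU_def EUU_def)
  have cvv: "covar M (g \<circ> Y) (g \<circ> Y) = EUU - EU^2"
    using covar_eq[of "g \<circ> Y" "g \<circ> Y"] g2Y EV EVV
    by (simp add: o_def power2_eq_square)
  have pos: "EUU - EU^2 > 0" using var_pos[OF L] cuu by simp
  show ?thesis unfolding corr_def cuv cuu cvv using pos
    by (simp add: real_sqrt_mult_self)
qed
end


lemma (in prob_space) bint:
  fixes f :: "'a \<Rightarrow> real"
  assumes "f \<in> borel_measurable M" "\<And>\<omega>. \<omega> \<in> space M \<Longrightarrow> \<bar>f \<omega>\<bar> \<le> B"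
  shows "integrable M f"
  by (rule integrable_const_bound[where B=B]) (use assms in auto)

lemma (in prob_space) ind2:
  fixes Z W :: "'a \<Rightarrow> real"
  assumes [measurable]: "Z \<in> borel_measurable M" "W \<in> borel_measurable M"
  shows "expectation (\<lambda>\<omega>. indicator {..a} (Z \<omega>) * indicator {..b} (W \<omega>) :: real) = measure M {\<omega>\<in>space M. Z \<omega> \<le> a \<and> W \<omega> \<le> b}"
proof -
  have "expectation (\<lambda>\<omega>. indicator {..a} (Z \<omega>) * indicator {..b} (W \<omega>) :: real) = expectation (indicator {\<omega>\<in>space M. Z \<omega> \<le> a \<and> W \<omega> \<le> b})"
    by (rule Bochner_Integration.integral_cong) (auto simp: indicator_def)
  also have "\<dots> = measure M {\<omega>\<in>space M. Z \<omega> \<le> a \<and> W \<omega> \<le> b}"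
    by (auto simp: Int_def intro!: arg_cong[where f="measure M"])
  finally show ?thesis .
qed

lemma (in prob_space) ind1:
  fixes Z :: "'a \<Rightarrow> real"
  assumes [measurable]: "Z \<in> borel_measurable M"
  shows "expectation (\<lambda>\<omega>. indicator {..a} (Z \<omega>)) = measure M {\<omega>\<in>space M. Z \<omega> \<le> a}"
proof -
  have "expectation (\<lambda>\<omega>. indicator {..a} (Z \<omega>)) = expectation (indicator {\<omega>\<in>space M. Z \<omega> \<le> a})"
    by (rule Bochner_Integration.integral_cong) (auto simp: indicator_def)
  also have "\<dots> = measure M {\<omega>\<in>space M. Z \<omega> \<le> a}"
    by (auto simp: Int_def intro!: arg_cong[where f="measure M"])
  finally show ?thesis .
qed

lemma (in prob_space) ex_in_AE:
  assumes "A \<in> events" "prob A > 0" "AE \<omega> in M. P \<omega>"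
  shows "\<exists>\<omega>\<in>A. P \<omega>"
proof (rule ccontr)
  assume "\<not> (\<exists>\<omega>\<in>A. P \<omega>)"
  then have "AE \<omega> in M. \<omega> \<notin> A" using assms(3) by (auto elim: AE_mp)
  then have "prob A = 0" using prob_eq_0[OF assms(1)] by simp
  then show False using assms(2) by simp
qed

lemma (in prob_space) nondeg2:
  fixes Z :: "'a \<Rightarrow> real"
  assumes [measurable]: "Z \<in> borel_measurable M" and xy: "x \<le> y"
    and p1: "0 < cdf1 M Z x" and p2: "cdf1 M Z y < 1"
  shows "\<not> (\<exists>c. AE \<omega> in M. indicator {..x} (Z \<omega>) + indicator {..y} (Z \<omega>) = (c::real))"
proof
  assume "\<exists>c. AE \<omega> in M. indicator {..x} (Z \<omega>) + indicator {..y} (Z \<omega>) = (c::real)"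
  then obtain c where c: "AE \<omega> in M. indicator {..x} (Z \<omega>) + indicator {..y} (Z \<omega>) = (c::real)" by blast
  have "\<exists>\<omega>\<in>{\<omega>\<in>space M. Z \<omega> \<le> x}. indicator {..x} (Z \<omega>) + indicator {..y} (Z \<omega>) = (c::real)"
    by (rule ex_in_AE[OF _ _ c]) (use p1 in \<open>auto simp: cdf1_def\<close>)
  then have c2: "c = 2" using xy by auto
  have e: "prob {\<omega>\<in>space M. y < Z \<omega>} = 1 - cdf1 M Z y"
  proof -
    have "{\<omega>\<in>space M. y < Z \<omega>} = space M - {\<omega>\<in>space M. Z \<omega> \<le> y}" by auto
    then show ?thesis unfolding cdf1_def by (simp add: prob_compl)
  qed
  have "\<exists>\<omega>\<in>{\<omega>\<in>space M. y < Z \<omega>}. indicator {..x} (Z \<omega>) + indicator {..y} (Z \<omega>) = (c::real)"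
    by (rule ex_in_AE[OF _ _ c]) (use p2 e in auto)
  then have "c = 0" using xy by auto
  then show False using c2 by simp
qed


context qfs begin

lemma cdfY: "cdf1 M Y t = cdf1 M X t"
proof -
  have "cdf1 M X t = measure (distr M borel X) {..t}"
    unfolding cdf1_def by (subst measure_distr) (auto intro!: arg_cong[where f="measure M"])
  moreover have "cdf1 M Y t = measure (distr M borel Y) {..t}"
    unfolding cdf1_def by (subst measure_distr) (auto intro!: arg_cong[where f="measure M"])
  ultimately show ?thesis using dist by simp
qed

lemma core:
  assumes IC: "\<forall>g. admissible M g X Y \<longrightarrow> corr M (g \<circ> X) (g \<circ> Y) = r"
    and xy: "x \<le> y" and p1: "0 < cdf1 M X x" and p2: "cdf1 M X y < 1"
  shows "jcdf M X Y x x + jcdf M X Y x y + jcdf M X Y y x + jcdf M X Y y y - (cdf1 M X x + cdf1 M X y)^2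
    = r * (3 * cdf1 M X x + cdf1 M X y - (cdf1 M X x + cdf1 M X y)^2)"
proof -
  define g where "g = (\<lambda>t::real. indicator {..x} t + indicator {..y} t :: real)"
  have gm[measurable]: "g \<in> borel_measurable borel" unfolding g_def by measurable
  have gb: "\<And>t. \<bar>(g t)^2\<bar> \<le> 4" unfolding g_def by (auto simp: indicator_def)
  have sqX: "integrable M (\<lambda>\<omega>. (g (X \<omega>))^2)"
    by (rule bint[where B=4]) (use gb in auto)
  have sqY: "integrable M (\<lambda>\<omega>. (g (Y \<omega>))^2)"
    by (rule bint[where B=4]) (use gb in auto)
  have LX: "L2 M (g \<circ> X)"
    unfolding L2_def using sqX nondeg2[OF Xm xy p1 p2] by (simp add: o_def g_def)
  have LY: "L2 M (g \<circ> Y)"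
    unfolding L2_def using sqY nondeg2[OF Ym xy] p1 p2 by (simp add: o_def g_def cdfY)
  have adm: "admissible M g X Y" unfolding admissible_def using LX LY by simp
  have cr: "corr M (g \<circ> X) (g \<circ> Y) = r" using IC adm by blast
  define Fx where "Fx = cdf1 M X x"
  define Fy where "Fy = cdf1 M X y"
  have mi: "(\<lambda>\<omega>. indicator {..a} (Z \<omega>) :: real) \<in> borel_measurable M" if "Z \<in> borel_measurable M" for a :: real and Z :: "'a \<Rightarrow> real"
  proof -
    have bi: "(indicator {..a} :: real \<Rightarrow> real) \<in> borel_measurable borel"
      by (rule borel_measurable_indicator) (rule borel_closed, rule closed_atMost)
    show ?thesis using measurable_compose[OF that bi] .
  qed
  have i1: "integrable M (\<lambda>\<omega>. indicator {..a} (Z \<omega>) * indicator {..b} (W \<omega>) :: real)"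
    if [measurable]: "Z \<in> borel_measurable M" "W \<in> borel_measurable M" for a b :: real and Z W :: "'a \<Rightarrow> real"
    apply (rule bint[where B=1])
     apply (rule borel_measurable_times[OF mi mi]; fact)
    apply (auto simp: indicator_def)
    done
  have i0: "integrable M (\<lambda>\<omega>. indicator {..a} (Z \<omega>) :: real)"
    if [measurable]: "Z \<in> borel_measurable M" for a :: real and Z :: "'a \<Rightarrow> real"
    apply (rule bint[where B=1])
     apply (rule mi; fact)
    apply (auto simp: indicator_def)
    done
  have eXY: "expectation (\<lambda>\<omega>. g (X \<omega>) * g (Y \<omega>)) = jcdf M X Y x x + jcdf M X Y x y + jcdf M X Y y x + jcdf M X Y y y"
  proof -
    have e: "(\<lambda>\<omega>. g (X \<omega>) * g (Y \<omega>)) = (\<lambda>\<omega>. indicator {..x} (X \<omega>) * indicator {..x} (Y \<omega>) + indicator {..x} (X \<omega>) * indicator {..y} (Y \<omega>)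
       + indicator {..y} (X \<omega>) * indicator {..x} (Y \<omega>) + indicator {..y} (X \<omega>) * indicator {..y} (Y \<omega>))"
      unfolding g_def by (auto simp: algebra_simps)
    show ?thesis unfolding e using i1[OF Xm Ym] by (simp add: ind2 jcdf_def)
  qed
  have eXX: "expectation (\<lambda>\<omega>. g (X \<omega>) * g (X \<omega>)) = 3 * Fx + Fy"
  proof -
    have e: "(\<lambda>\<omega>. g (X \<omega>) * g (X \<omega>)) = (\<lambda>\<omega>. 3 * indicator {..x} (X \<omega>) + indicator {..y} (X \<omega>))"
      unfolding g_def using xy by (auto simp: indicator_def)
    show ?thesis unfolding e using i0[OF Xm] by (simp add: ind1 Fx_def Fy_def cdf1_def)
  qed
  have eX: "expectation (\<lambda>\<omega>. g (X \<omega>)) = Fx + Fy"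
    unfolding g_def using i0[OF Xm] by (simp add: ind1 Fx_def Fy_def cdf1_def)
  have eY: "expectation (\<lambda>\<omega>. g (Y \<omega>)) = Fx + Fy" using eX integral_Y[OF gm] by simp
  have eYY: "expectation (\<lambda>\<omega>. g (Y \<omega>) * g (Y \<omega>)) = 3 * Fx + Fy"
    using eXX integral_Y[of "\<lambda>t. g t * g t"] by simp
  have cuv: "covar M (g \<circ> X) (g \<circ> Y) = jcdf M X Y x x + jcdf M X Y x y + jcdf M X Y y x + jcdf M X Y y y - (Fx + Fy) * (Fx + Fy)"
    using covar_eq[of "g \<circ> X" "g \<circ> Y"] sqX sqY eXY eX eY by (simp add: o_def)
  have cuu: "covar M (g \<circ> X) (g \<circ> X) = 3 * Fx + Fy - (Fx + Fy) * (Fx + Fy)"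
    using covar_eq[of "g \<circ> X" "g \<circ> X"] sqX eXX eX by (simp add: o_def)
  have cvv: "covar M (g \<circ> Y) (g \<circ> Y) = 3 * Fx + Fy - (Fx + Fy) * (Fx + Fy)"
    using covar_eq[of "g \<circ> Y" "g \<circ> Y"] sqY eYY eY by (simp add: o_def)
  have pos: "3 * Fx + Fy - (Fx + Fy) * (Fx + Fy) > 0" using var_pos[OF LX] cuu by simp
  have "covar M (g \<circ> X) (g \<circ> Y) / (3 * Fx + Fy - (Fx + Fy) * (Fx + Fy)) = r"
    using cr pos unfolding corr_def cuu cvv by (simp add: real_sqrt_mult_self)
  then have "covar M (g \<circ> X) (g \<circ> Y) = r * (3 * Fx + Fy - (Fx + Fy) * (Fx + Fy))"
    using pos by (simp add: field_simps)
  then show ?thesis unfolding cuv Fx_def Fy_def by (simp add: power2_eq_square)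
qed


lemma Fb: "0 \<le> cdf1 M X t" "cdf1 M X t \<le> 1" unfolding cdf1_def by auto

lemma inter_full:
  assumes "A \<in> events" "B \<in> events" "prob B = 1"
  shows "prob (A \<inter> B) = prob A"
proof -
  have "prob (A - B) \<le> prob (space M - B)" by (rule finite_measure_mono) (use assms sets.sets_into_space in auto)
  also have "\<dots> = 0" using prob_compl[OF assms(2)] assms(3) by simp
  finally have "prob (A - B) = 0" using measure_nonneg[of M "A - B"] by linarith
  then show ?thesis using finite_measure_Diff'[OF assms(1,2)] by simp
qed

lemma H_le: "jcdf M X Y a b \<le> cdf1 M X a" "jcdf M X Y a b \<le> cdf1 M X b"
proof -
  show "jcdf M X Y a b \<le> cdf1 M X a" unfolding jcdf_def cdf1_def by (rule finite_measure_mono) auto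
  have "jcdf M X Y a b \<le> cdf1 M Y b" unfolding jcdf_def cdf1_def by (rule finite_measure_mono) auto
  then show "jcdf M X Y a b \<le> cdf1 M X b" by (simp add: cdfY)
qed

lemma H_full1: "cdf1 M X b = 1 \<Longrightarrow> jcdf M X Y a b = cdf1 M X a"
proof -
  assume "cdf1 M X b = 1"
  then have p: "prob {\<omega>\<in>space M. Y \<omega> \<le> b} = 1" using cdfY[of b] unfolding cdf1_def by simp
  have s: "{\<omega>\<in>space M. X \<omega> \<le> a \<and> Y \<omega> \<le> b} = {\<omega>\<in>space M. X \<omega> \<le> a} \<inter> {\<omega>\<in>space M. Y \<omega> \<le> b}" by auto
  have e1: "{\<omega>\<in>space M. X \<omega> \<le> a} \<in> events" by measurable
  have e2: "{\<omega>\<in>space M. Y \<omega> \<le> b} \<in> events" by measurable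
  show ?thesis unfolding jcdf_def cdf1_def s by (rule inter_full[OF e1 e2 p])
qed

lemma H_full2: "cdf1 M X a = 1 \<Longrightarrow> jcdf M X Y a b = cdf1 M X b"
proof -
  assume "cdf1 M X a = 1"
  then have p: "prob {\<omega>\<in>space M. X \<omega> \<le> a} = 1" unfolding cdf1_def by simp
  have s: "{\<omega>\<in>space M. X \<omega> \<le> a \<and> Y \<omega> \<le> b} = {\<omega>\<in>space M. Y \<omega> \<le> b} \<inter> {\<omega>\<in>space M. X \<omega> \<le> a}" by auto
  have e1: "{\<omega>\<in>space M. X \<omega> \<le> a} \<in> events" by measurable
  have e2: "{\<omega>\<in>space M. Y \<omega> \<le> b} \<in> events" by measurable
  have "jcdf M X Y a b = cdf1 M Y b" unfolding jcdf_def cdf1_def s by (rule inter_full[OF e2 e1 p])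
  then show ?thesis by (simp add: cdfY)
qed

lemma diag:
  assumes IC: "\<forall>g. admissible M g X Y \<longrightarrow> corr M (g \<circ> X) (g \<circ> Y) = r"
  shows "jcdf M X Y x x = r * cdf1 M X x + (1 - r) * (cdf1 M X x)^2"
proof -
  consider "cdf1 M X x = 0" | "cdf1 M X x = 1" | "0 < cdf1 M X x" "cdf1 M X x < 1"
    using Fb[of x] by linarith
  then show ?thesis
  proof cases
    case 1
    have h0: "0 \<le> jcdf M X Y x x" unfolding jcdf_def by simp
    have "jcdf M X Y x x = 0" using H_le(1)[of x x] 1 h0 by linarith
    then show ?thesis using 1 by simp
  next
    case 2
    then show ?thesis using H_full1[of x x] by (simp add: algebra_simps)
  next
    case 3
    from core[OF IC order.refl 3] show ?thesis by (simp add: power2_eq_square algebra_simps)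
  qed
qed

lemma offdiag:
  assumes IC: "\<forall>g. admissible M g X Y \<longrightarrow> corr M (g \<circ> X) (g \<circ> Y) = r" and xy: "x \<le> y"
  shows "(jcdf M X Y x y + jcdf M X Y y x) / 2 = r * min (cdf1 M X x) (cdf1 M X y) + (1 - r) * cdf1 M X x * cdf1 M X y"
proof -
  have mn: "min (cdf1 M X x) (cdf1 M X y) = cdf1 M X x" using cdf_mono[OF xy] by simp
  consider "cdf1 M X x = 0" | "cdf1 M X y = 1" | "0 < cdf1 M X x" "cdf1 M X y < 1"
    using Fb[of x] Fb[of y] by linarith
  then show ?thesis
  proof cases
    case 1
    have "jcdf M X Y x y = 0" "jcdf M X Y y x = 0"
      using H_le[of x y] H_le[of y x] 1 unfolding jcdf_def by (auto intro: antisym)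
    then show ?thesis using 1 mn by simp
  next
    case 2
    have "jcdf M X Y x y = cdf1 M X x" "jcdf M X Y y x = cdf1 M X x" using H_full1[OF 2] H_full2[OF 2] by auto
    then show ?thesis using mn 2 by (simp add: algebra_simps)
  next
    case 3
    have c: "jcdf M X Y x x + jcdf M X Y x y + jcdf M X Y y x + jcdf M X Y y y - (cdf1 M X x + cdf1 M X y)^2
      = r * (3 * cdf1 M X x + cdf1 M X y - (cdf1 M X x + cdf1 M X y)^2)" by (rule core[OF IC xy 3])
    have d1: "jcdf M X Y x x = r * cdf1 M X x + (1 - r) * (cdf1 M X x)^2" by (rule diag[OF IC])
    have d2: "jcdf M X Y y y = r * cdf1 M X y + (1 - r) * (cdf1 M X y)^2" by (rule diag[OF IC])
    have "jcdf M X Y x y + jcdf M X Y y x = 2 * (r * cdf1 M X x + (1 - r) * cdf1 M X x * cdf1 M X y)"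
      using c unfolding d1 d2 by (simp add: power2_eq_square algebra_simps)
    then show ?thesis using mn by simp
  qed
qed

lemma ic_qf:
  assumes IC: "\<forall>g. admissible M g X Y \<longrightarrow> corr M (g \<circ> X) (g \<circ> Y) = r"
  shows "quasi_frechet M r X Y"
  unfolding quasi_frechet_def
proof (intro allI)
  fix x y
  show "(jcdf M X Y x y + jcdf M X Y y x) / 2 = r * min (cdf1 M X x) (cdf1 M X y) + (1 - r) * cdf1 M X x * cdf1 M X y"
  proof (cases "x \<le> y")
    case True then show ?thesis by (rule offdiag[OF IC])
  next
    case False
    then have "y \<le> x" by simp
    have o: "(jcdf M X Y y x + jcdf M X Y x y) / 2 = r * min (cdf1 M X y) (cdf1 M X x) + (1 - r) * cdf1 M X y * cdf1 M X x"
      by (rule offdiag[OF IC \<open>y \<le> x\<close>])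
    have e1: "min (cdf1 M X y) (cdf1 M X x) = min (cdf1 M X x) (cdf1 M X y)" by (rule min.commute)
    have e2: "(1 - r) * cdf1 M X y * cdf1 M X x = (1 - r) * cdf1 M X x * cdf1 M X y" by simp
    show ?thesis using o unfolding e1 e2 add.commute[of "jcdf M X Y y x"] .
  qed
qed

end

theorem theorem3:
  fixes M :: "'a measure" and X Y :: "'a \<Rightarrow> real" and r :: real
  assumes "prob_space M" and "atomless M"
    and "L2 M X" and "L2 M Y"
    and "distr M borel X = distr M borel Y"
    and "-1 \<le> r" and "r \<le> 1"
  shows "IC M r X Y \<longleftrightarrow> quasi_frechet M r X Y"
proof -
  have Xm: "X \<in> borel_measurable M" and Ym: "Y \<in> borel_measurable M"
    using assms(3,4) unfolding L2_def by auto
  interpret qfs M X Y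
    by (rule qfs.intro[OF assms(1)], rule qfs_axioms.intro[OF Xm Ym assms(5)])
  show ?thesis
  proof
    assume "IC M r X Y"
    then have "\<forall>g. admissible M g X Y \<longrightarrow> corr M (g \<circ> X) (g \<circ> Y) = r" unfolding IC_def by blast
    then show "quasi_frechet M r X Y" by (rule ic_qf)
  next
    assume QF: "quasi_frechet M r X Y"
    have A: "\<forall>g. admissible M g X Y \<longrightarrow> corr M (g \<circ> X) (g \<circ> Y) = r"
    proof (intro allI impI)
      fix g assume "admissible M g X Y"
      then have gm: "g \<in> borel_measurable borel" and L: "L2 M (g \<circ> X)" unfolding admissible_def by auto
      show "corr M (g \<circ> X) (g \<circ> Y) = r" by (rule corr_g[OF QF assms(7) gm L])
    qed
    have "corr M (id \<circ> X) (id \<circ> Y) = r" by (rule corr_g[OF QF assms(7)]) (use assms(3) in simp_all)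
    then have "corr M X Y = r" by simp
    then show "IC M r X Y" unfolding IC_def using assms(3,4) A by blast
  qed
qed

end
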